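(* Let $\mathbf{D}^*=[\mathbf{d}^*_1,\dots,\mathbf{d}^*_n]\in\mathbb{R}^{d\times n}$ be column-orthogonal and let $\mathbf{x}=\mathbf{D}^*\boldsymbol{\beta}$, where $\boldsymbol{\beta}\in\mathbb{R}^n$ has support $S^*$ with $|S^*|=k$ and non-zero entries satisfying $\gamma\le|\beta_i|\le\Gamma$ for $0<\gamma\le\Gamma$. Let $\rho>0$ with $2\rho<\frac{\gamma}{4\sqrt{k}\Gamma}$. Then for any $\mathbf{D}=[\mathbf{d}_1,\dots,\mathbf{d}_n]\in\mathbb{R}^{d\times n}$ with $\|\mathbf{D}-\mathbf{D}^*\|_{1,2}\le2\rho$, $$S=\arg\max_{T\subseteq[n],|T|\le k}\sum_{i\in T}|\langle\mathbf{d}_i,\mathbf{x}\rangle|=S^*.$$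
   Context: Column-orthogonal means $\mathbf{A}^\top\mathbf{A}=\mathbf{I}$; $\|\mathbf{A}\|_{1,2}$ is the maximum Euclidean norm of the columns of $\mathbf{A}$. *)

theory Defs
  imports "HOL-Analysis.Analysis"
begin

text \<open>A d x n real matrix is \<open>real^'n^'d\<close>; its i-th column is \<open>column i A\<close>.\<close>

definition col_orthogonal :: "real^'n^'d \<Rightarrow> bool" where
  "col_orthogonal A \<longleftrightarrow> transpose A ** A = mat 1"

definition norm12 :: "real^'n^'d \<Rightarrow> real" where
  "norm12 A = Max (range (\<lambda>i. norm (column i A)))"

definition supp_vec :: "real^'n \<Rightarrow> 'n set" where
  "supp_vec b = {i. b $ i \<noteq> 0}"

definition argmax_sets :: "real^'n^'d \<Rightarrow> real^'d \<Rightarrow> nat \<Rightarrow> 'n set set" where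
  "argmax_sets D x k =
     {T. card T \<le> k \<and>
         (\<forall>T'. card T' \<le> k \<longrightarrow>
            (\<Sum>i\<in>T'. \<bar>column i D \<bullet> x\<bar>) \<le> (\<Sum>i\<in>T. \<bar>column i D \<bullet> x\<bar>))}"

end

theory Submission
  imports Defs
begin

lemma col_sub: "column i (A - B) = column i A - column i (B::real^'n^'m)"
  by (simp add: column_def vec_eq_iff)

lemma transpose_mv_nth: "(transpose A *v y) $ i = column i A \<bullet> (y::real^'m)"
  by (simp add: matrix_vector_mult_def column_def transpose_def inner_vec_def mult.commute)

lemma key_sets:
  fixes a :: "'n::finite \<Rightarrow> real" and S :: "'n set" and c :: real
  assumes hi: "\<And>i. i \<in> S \<Longrightarrow> a i > c" and lo: "\<And>i. i \<notin> S \<Longrightarrow> 0 \<le> a i \<and> a i < c"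
    and c0: "0 \<le> c" and cT: "card T \<le> card S" and ne: "T \<noteq> S"
  shows "(\<Sum>i\<in>T. a i) < (\<Sum>i\<in>S. a i)"
proof -
  have fin: "finite A" for A :: "'n set" by simp
  have "S - T \<noteq> {}"
  proof
    assume "S - T = {}"
    hence "S \<subseteq> T" by blast
    hence "S = T" using cT card_seteq[OF fin] by blast
    thus False using ne by simp
  qed
  have c1: "card (T - S) \<le> card (S - T)"
  proof -
    have "card (T - S) = card T - card (T \<inter> S)" by (simp add: card_Diff_subset_Int)
    moreover have "card (S - T) = card S - card (S \<inter> T)" by (simp add: card_Diff_subset_Int)
    moreover have "card (T \<inter> S) \<le> card T" by (simp add: card_mono)
    ultimately show ?thesis using cT by (simp add: Int_commute)
  qed
  have "(\<Sum>i\<in>T - S. a i) \<le> (\<Sum>i\<in>T - S. c)"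
    by (rule sum_mono) (use lo in fastforce)
  also have "\<dots> = card (T - S) * c" by simp
  also have "\<dots> \<le> card (S - T) * c"
  proof -
    show ?thesis using c1 c0 by (simp add: mult_right_mono)
  qed
  also have "\<dots> = (\<Sum>i\<in>S - T. c)" by simp
  also have "\<dots> < (\<Sum>i\<in>S - T. a i)"
    by (rule sum_strict_mono) (use \<open>S - T \<noteq> {}\<close> hi in auto)
  finally have *: "(\<Sum>i\<in>T - S. a i) < (\<Sum>i\<in>S - T. a i)" .
  have "(\<Sum>i\<in>T. a i) = (\<Sum>i\<in>T - S. a i) + (\<Sum>i\<in>T \<inter> S. a i)"
    by (metis fin sum.Int_Diff add.commute)
  moreover have "(\<Sum>i\<in>S. a i) = (\<Sum>i\<in>S - T. a i) + (\<Sum>i\<in>S \<inter> T. a i)"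
    by (metis fin sum.Int_Diff add.commute)
  ultimately show ?thesis using * by (simp add: Int_commute)
qed

theorem lemmaC4:
  fixes Dstar D :: "real^'n::finite^'d::finite"
    and \<beta> :: "real^'n" and x :: "real^'d"
    and k :: nat and \<gamma> \<Gamma> \<rho> :: real
  assumes "col_orthogonal Dstar"
    and "x = Dstar *v \<beta>"
    and "card (supp_vec \<beta>) = k"
    and "0 < \<gamma>" and "\<gamma> \<le> \<Gamma>"
    and "\<forall>i\<in>supp_vec \<beta>. \<gamma> \<le> \<bar>\<beta> $ i\<bar> \<and> \<bar>\<beta> $ i\<bar> \<le> \<Gamma>"
    and "0 < \<rho>" and "2 * \<rho> < \<gamma> / (4 * sqrt (real k) * \<Gamma>)"
    and "norm12 (D - Dstar) \<le> 2 * \<rho>"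
  shows "argmax_sets D x k = {supp_vec \<beta>}"
proof -
  let ?S = "supp_vec \<beta>"
  let ?a = "\<lambda>i. \<bar>column i D \<bullet> x\<bar>"
  have TD: "transpose Dstar ** Dstar = mat 1" using assms(1) by (simp add: col_orthogonal_def)
  have Tx: "transpose Dstar *v x = \<beta>"
    using TD assms(2) by (simp add: matrix_vector_mul_assoc)
  have xb: "column i Dstar \<bullet> x = \<beta> $ i" for i
    using Tx transpose_mv_nth[of Dstar x i] by simp
  have xx: "x \<bullet> x = \<beta> \<bullet> \<beta>"
  proof -
    have "x \<bullet> x = (\<beta> v* transpose Dstar) \<bullet> x" unfolding vector_transpose_matrix assms(2) by simp
    also have "\<dots> = \<beta> \<bullet> \<beta>" by (simp only: dot_lmul_matrix Tx)
    finally show ?thesis .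
  qed
  have kpos: "k > 0"
  proof (rule ccontr)
    assume "\<not> k > 0" hence "k = 0" by simp
    thus False using assms(7,8) by simp
  qed
  have Gpos: "\<Gamma> > 0" using assms(4,5) by linarith
  have bb: "\<beta> \<bullet> \<beta> \<le> real k * \<Gamma>^2"
  proof -
    have "\<beta> \<bullet> \<beta> = (\<Sum>i\<in>UNIV. \<beta> $ i * \<beta> $ i)" by (simp add: inner_vec_def)
    also have "\<dots> = (\<Sum>i\<in>?S. \<beta> $ i * \<beta> $ i)"
      by (rule sum.mono_neutral_right) (auto simp: supp_vec_def)
    also have "\<dots> \<le> (\<Sum>i\<in>?S. \<Gamma>^2)"
    proof (rule sum_mono)
      fix i assume "i \<in> ?S"
      hence "\<bar>\<beta> $ i\<bar> \<le> \<Gamma>" using assms(6) by blast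
      hence "\<bar>\<beta> $ i\<bar> * \<bar>\<beta> $ i\<bar> \<le> \<Gamma> * \<Gamma>" using Gpos by (intro mult_mono) auto
      thus "\<beta> $ i * \<beta> $ i \<le> \<Gamma>^2" by (metis abs_mult_self_eq power2_eq_square)
    qed
    also have "\<dots> = real k * \<Gamma>^2" using assms(3) by simp
    finally show ?thesis .
  qed
  have nx: "norm x \<le> sqrt (real k) * \<Gamma>"
  proof -
    have "norm x = sqrt (x \<bullet> x)" by (simp add: norm_eq_sqrt_inner)
    also have "\<dots> \<le> sqrt (real k * \<Gamma>^2)" using xx bb by simp
    also have "\<dots> = sqrt (real k) * \<Gamma>" using Gpos by (simp add: real_sqrt_mult)
    finally show ?thesis .
  qed
  have rk: "2 * \<rho> * (sqrt (real k) * \<Gamma>) < \<gamma> / 4"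
  proof -
    have p: "4 * sqrt (real k) * \<Gamma> > 0" using kpos Gpos by simp
    have "2 * \<rho> * (4 * sqrt (real k) * \<Gamma>) < \<gamma>"
      using assms(8) p by (simp add: pos_less_divide_eq)
    thus ?thesis by simp
  qed
  have err: "\<bar>column i D \<bullet> x - \<beta> $ i\<bar> < \<gamma> / 4" for i
  proof -
    have "column i D \<bullet> x - \<beta> $ i = column i (D - Dstar) \<bullet> x"
      by (simp add: col_sub xb inner_diff_left)
    hence "\<bar>column i D \<bullet> x - \<beta> $ i\<bar> \<le> norm (column i (D - Dstar)) * norm x"
      by (simp add: Cauchy_Schwarz_ineq2)
    also have "\<dots> \<le> 2 * \<rho> * (sqrt (real k) * \<Gamma>)"
    proof (rule mult_mono)
      have "norm (column i (D - Dstar)) \<le> norm12 (D - Dstar)"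
        unfolding norm12_def by (rule Max_ge) auto
      thus "norm (column i (D - Dstar)) \<le> 2 * \<rho>" using assms(9) by linarith
    qed (use nx assms(7) in auto)
    also have "\<dots> < \<gamma> / 4" by (rule rk)
    finally show ?thesis .
  qed
  have hi: "?a i > \<gamma> / 4" if "i \<in> ?S" for i
  proof -
    have "\<gamma> \<le> \<bar>\<beta> $ i\<bar>" using that assms(6) by blast
    thus ?thesis using err[of i] assms(4) by linarith
  qed
  have lo: "0 \<le> ?a i \<and> ?a i < \<gamma> / 4" if "i \<notin> ?S" for i
  proof -
    have "\<beta> $ i = 0" using that by (simp add: supp_vec_def)
    thus ?thesis using err[of i] by simp
  qed
  have main: "(\<Sum>i\<in>T. ?a i) < (\<Sum>i\<in>?S. ?a i)" if "card T \<le> k" "T \<noteq> ?S" for T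
    by (rule key_sets[where c = "\<gamma>/4"]) (use hi lo assms(3,4) that in auto)
  show ?thesis
  proof (rule set_eqI, rule iffI)
    fix T assume "T \<in> argmax_sets D x k"
    hence "card T \<le> k" "(\<Sum>i\<in>?S. ?a i) \<le> (\<Sum>i\<in>T. ?a i)"
      using assms(3) by (auto simp: argmax_sets_def)
    thus "T \<in> {?S}" using main[of T] by fastforce
  next
    fix T assume "T \<in> {?S}"
    hence "T = ?S" by simp
    thus "T \<in> argmax_sets D x k"
      unfolding argmax_sets_def using main assms(3) by fastforce
  qed
qed

end
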